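(* Let $\Omega=(a_1,b_1)\times\cdots\times(a_n,b_n)\subset\mathbb{R}^n$ be a bounded box. There is a constant $C_P(\Omega)$, independent of the admissible mesh size vector $h$, such that $\|u\|_{L^2}\le C_P(\Omega)\|u\|_D$ for all $u\in W_0^{1,2}(\overline{\Omega}_h)$. Moreover $$\frac{1}{\lambda_{1,h}}\le C_P(\Omega)^2\le\frac{1}{4n^2}\sum_{i=1}^n(b_i-a_i)^2,$$ where the lower bound is optimal (for fixed $h$ the smallest admissible constant $C$ satisfies $C^2=1/\lambda_{1,h}$).
   Context: Admissible mesh: $h_i>0$, $a_i=k_ih_i$, $b_i=l_ih_i$, $k_i,l_i\in\mathbb{Z}$, $l_i-k_i>1$; $\mathbb{R}^n_h=\{(h_1z_1,\dots,h_nz_n):z_i\in\mathbb{Z}\}$, $\overline{\Omega}_h=\overline{\Omega}\cap\mathbb{R}^n_h$, $\partial\Omega_h=\partial\Omega\cap\mathbb{R}^n_h$, $\partial_i^+\Omega_h=\partial\Omega_h\cap\{x_i=b_i\}$, $\mathbf{h}=h_1\cdots h_n$, $D_i^+u(x)=(u(x+h_ie_i)-u(x))/h_i$. $\|u\|_{L^2}^2=\sum_{x\in\overline{\Omega}_h}|u(x)|^2\mathbf{h}$, $\|u\|_D^2=\sum_{i=1}^n\sum_{x\in\overline{\Omega}_h\setminus\partial_i^+\Omega_h}|D_i^+u(x)|^2\mathbf{h}$. $W_0^{1,2}(\overline{\Omega}_h)$ is the set of $u:\overline{\Omega}_h\to\mathbb{R}$ with $u=0$ on $\partial\Omega_h$.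 $\lambda_{1,h}=\sum_{i=1}^n\frac{4}{h_i^2}\sin^2\big(\frac{\pi h_i}{2(b_i-a_i)}\big)$ is the first Dirichlet eigenvalue of $-\Delta_h$, $\Delta_hu(x)=\sum_i\frac{u(x+h_ie_i)-2u(x)+u(x-h_ie_i)}{h_i^2}$. *)

theory Defs
  imports "HOL-Analysis.Analysis"
begin

text \<open>Points of R^n are functions 'n \<Rightarrow> real for a finite index type 'n (n = CARD('n)).
  The box is Omega = prod_i (a i, b i); h is the mesh size vector.\<close>

definition admissible_mesh :: "('n::finite \<Rightarrow> real) \<Rightarrow> ('n \<Rightarrow> real) \<Rightarrow> ('n \<Rightarrow> real) \<Rightarrow> bool" where
  "admissible_mesh a b h \<longleftrightarrow>
     (\<forall>i. h i > 0 \<and> (\<exists>k l :: int. a i = of_int k * h i \<and> b i = of_int l * h i \<and> l - k > 1))"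

definition grid_closed :: "('n::finite \<Rightarrow> real) \<Rightarrow> ('n \<Rightarrow> real) \<Rightarrow> ('n \<Rightarrow> real) \<Rightarrow> ('n \<Rightarrow> real) set" where
  "grid_closed a b h = {x. \<forall>i. a i \<le> x i \<and> x i \<le> b i \<and> (\<exists>z::int. x i = h i * of_int z)}"

definition grid_boundary :: "('n::finite \<Rightarrow> real) \<Rightarrow> ('n \<Rightarrow> real) \<Rightarrow> ('n \<Rightarrow> real) \<Rightarrow> ('n \<Rightarrow> real) set" where
  "grid_boundary a b h = {x \<in> grid_closed a b h. \<exists>i. x i = a i \<or> x i = b i}"

definition grid_face_plus :: "('n::finite \<Rightarrow> real) \<Rightarrow> ('n \<Rightarrow> real) \<Rightarrow> ('n \<Rightarrow> real) \<Rightarrow> 'n \<Rightarrow> ('n \<Rightarrow> real) set" where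
  "grid_face_plus a b h i = {x \<in> grid_boundary a b h. x i = b i}"

definition cell_volume :: "('n::finite \<Rightarrow> real) \<Rightarrow> real" where
  "cell_volume h = (\<Prod>i\<in>UNIV. h i)"

definition fwd_diff :: "('n \<Rightarrow> real) \<Rightarrow> 'n \<Rightarrow> (('n \<Rightarrow> real) \<Rightarrow> real) \<Rightarrow> ('n \<Rightarrow> real) \<Rightarrow> real" where
  "fwd_diff h i u x = (u (x(i := x i + h i)) - u x) / h i"

definition disc_L2_norm :: "('n::finite \<Rightarrow> real) \<Rightarrow> ('n \<Rightarrow> real) \<Rightarrow> ('n \<Rightarrow> real) \<Rightarrow> (('n \<Rightarrow> real) \<Rightarrow> real) \<Rightarrow> real" where
  "disc_L2_norm a b h u = sqrt (\<Sum>x\<in>grid_closed a b h. (u x)\<^sup>2 * cell_volume h)"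

definition disc_D_norm :: "('n::finite \<Rightarrow> real) \<Rightarrow> ('n \<Rightarrow> real) \<Rightarrow> ('n \<Rightarrow> real) \<Rightarrow> (('n \<Rightarrow> real) \<Rightarrow> real) \<Rightarrow> real" where
  "disc_D_norm a b h u = sqrt (\<Sum>i\<in>UNIV. \<Sum>x\<in>grid_closed a b h - grid_face_plus a b h i.
        (fwd_diff h i u x)\<^sup>2 * cell_volume h)"

text \<open>W_0^{1,2}: functions on the closed grid vanishing on the boundary grid
  (values outside the closed grid are irrelevant to both norms)\<close>
definition W0_grid :: "('n::finite \<Rightarrow> real) \<Rightarrow> ('n \<Rightarrow> real) \<Rightarrow> ('n \<Rightarrow> real) \<Rightarrow> (('n \<Rightarrow> real) \<Rightarrow> real) set" where
  "W0_grid a b h = {u. \<forall>x\<in>grid_boundary a b h. u x = 0}"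

definition lambda1_h :: "('n::finite \<Rightarrow> real) \<Rightarrow> ('n \<Rightarrow> real) \<Rightarrow> ('n \<Rightarrow> real) \<Rightarrow> real" where
  "lambda1_h a b h = (\<Sum>i\<in>UNIV. 4 / (h i)\<^sup>2 * (sin (pi * h i / (2 * (b i - a i))))\<^sup>2)"

end

theory Submission imports Defs begin

lemma edge_identity:
  fixes a b p q :: real
  assumes "p \<ge> 0" "q \<ge> 0" "p = 0 \<Longrightarrow> a = 0" "q = 0 \<Longrightarrow> b = 0"
  shows "(b - a)^2 = a^2 * (1 - q/p) + b^2 * (1 - p/q) + (a*q - b*p)^2/(p*q)"
proof (cases "p = 0 \<or> q = 0")
  case True thus ?thesis using assms by (auto simp: power2_eq_square)
next
  case False then have "p > 0" "q > 0" using assms by auto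
  thus ?thesis by (simp add: field_simps power2_eq_square)
qed

lemma sin_lower: "0 \<le> x \<Longrightarrow> x \<le> 1 \<Longrightarrow> 5 * x / 6 \<le> sin (x::real)"
proof -
  assume x: "0 \<le> x" "x \<le> 1"
  have "\<bar>sin x - (\<Sum>m<3. sin_coeff m * x ^ m)\<bar> \<le> inverse (fact 3) * \<bar>x\<bar> ^ 3"
    by (rule Maclaurin_sin_bound)
  moreover have "(\<Sum>m<3. sin_coeff m * x ^ m) = x"
    by (simp add: sin_coeff_def numeral_3_eq_3 lessThan_Suc)
  moreover have "x*x \<le> 1" using x by (simp add: mult_le_one)
  then have "x*(x*x) \<le> x*1" using x by (intro mult_left_mono) auto
  then have "x^3 \<le> x" by (simp add: power3_eq_cube)
  ultimately have "\<bar>sin x - x\<bar> * 6 \<le> x" using x by (simp add: fact_numeral)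
  thus ?thesis by (auto simp: abs_if split: if_splits)
qed

definition phi :: "('n \<Rightarrow> real) \<Rightarrow> ('n \<Rightarrow> real) \<Rightarrow> 'n \<Rightarrow> real \<Rightarrow> real" where
  "phi a b i t = sin (pi * (t - a i) / (b i - a i))"

lemma adm_h: "admissible_mesh a b h \<Longrightarrow> h i > 0"
  by (simp add: admissible_mesh_def)

lemma adm_kl: "admissible_mesh a b h \<Longrightarrow> \<exists>k l :: int. a i = of_int k * h i \<and> b i = of_int l * h i \<and> l - k > 1"
  by (simp add: admissible_mesh_def)

lemma adm_ab: assumes "admissible_mesh a b h" shows "2 * h i \<le> b i - a i"
proof -
  obtain k l :: int where kl: "a i = of_int k * h i" "b i = of_int l * h i" "l - k > 1"
    using adm_kl[OF assms] by blast
  have "real_of_int (l - k) \<ge> 2" using kl(3) by linarith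
  hence "2 * h i \<le> real_of_int (l-k) * h i" using adm_h[OF assms, of i] by (intro mult_right_mono) auto
  thus ?thesis using kl by (simp add: algebra_simps)
qed

lemma int_cancel: "(h::real) > 0 \<Longrightarrow> of_int k * h \<le> h * of_int z \<longleftrightarrow> k \<le> z"
  by (simp add: mult.commute)

lemma grid_finite: assumes "admissible_mesh a b h" shows "finite (grid_closed a b h)"
proof -
  have "\<forall>i. \<exists>k l :: int. a i = of_int k * h i \<and> b i = of_int l * h i \<and> l - k > 1"
    using adm_kl[OF assms] by blast
  then obtain K L where KL: "\<And>i. a i = of_int (K i) * h i \<and> b i = of_int (L i) * h i"
    by metis
  have "grid_closed a b h \<subseteq> Pi\<^sub>E UNIV (\<lambda>i. (\<lambda>z. h i * of_int z) ` {K i..L i})"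
  proof
    fix x assume x: "x \<in> grid_closed a b h"
    have "x i \<in> (\<lambda>z. h i * of_int z) ` {K i..L i}" for i
    proof -
      from x have "a i \<le> x i \<and> x i \<le> b i \<and> (\<exists>z. x i = h i * of_int z)"
        by (simp add: grid_closed_def)
      then obtain z where z: "x i = h i * of_int z" "a i \<le> x i" "x i \<le> b i" by blast
      have hp: "h i > 0" using adm_h[OF assms] .
      have "K i \<le> z" using z KL[of i] hp by (simp add: mult.commute)
      moreover have "z \<le> L i" using z KL[of i] hp by (simp add: mult.commute)
      ultimately show ?thesis using z by auto
    qed
    thus "x \<in> Pi\<^sub>E UNIV (\<lambda>i. (\<lambda>z. h i * of_int z) ` {K i..L i})"
      by (simp add: PiE_UNIV_domain)
  qed
  moreover have "finite (Pi\<^sub>E UNIV (\<lambda>i. (\<lambda>z. h i * of_int z) ` {K i..L i}))"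
    by (intro finite_PiE) auto
  ultimately show ?thesis by (rule finite_subset)
qed

lemma grid_Gi: "grid_closed a b h - grid_face_plus a b h i = {x \<in> grid_closed a b h. x i \<noteq> b i}"
  by (auto simp: grid_face_plus_def grid_boundary_def)

lemma grid_bd: "x \<in> grid_closed a b h \<Longrightarrow> x i = a i \<or> x i = b i \<Longrightarrow> x \<in> grid_boundary a b h"
  by (auto simp: grid_boundary_def)

lemma W0_zero: "u \<in> W0_grid a b h \<Longrightarrow> x \<in> grid_closed a b h \<Longrightarrow> x i = a i \<or> x i = b i \<Longrightarrow> u x = 0"
  unfolding W0_grid_def using grid_bd[of x a b h i] by blast

lemma grid_coord: "x \<in> grid_closed a b h \<Longrightarrow> a i \<le> x i \<and> x i \<le> b i \<and> (\<exists>z::int. x i = h i * of_int z)"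
  by (simp add: grid_closed_def)

lemma adm_lt: "admissible_mesh a b h \<Longrightarrow> a i < b i"
  using adm_ab[of a b h i] adm_h[of a b h i] by linarith

lemma shift_mem:
  assumes adm: "admissible_mesh a b h" and x: "x \<in> grid_closed a b h" "x i \<noteq> b i"
  shows "x(i := x i + h i) \<in> grid_closed a b h"
proof -
  obtain k l :: int where kl: "a i = of_int k * h i" "b i = of_int l * h i" "l - k > 1"
    using adm_kl[OF adm] by blast
  obtain z where z: "x i = h i * of_int z" "a i \<le> x i" "x i \<le> b i" using grid_coord[OF x(1), of i] by blast
  have hp: "h i > 0" using adm_h[OF adm] .
  have "z < l" using z kl x(2) hp by (simp add: mult.commute)
  hence "real_of_int (z + 1) \<le> of_int l" by linarith
  hence "h i * of_int (z+1) \<le> h i * of_int l" using hp by (intro mult_left_mono) auto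
  hence le: "x i + h i \<le> b i" using z kl by (simp add: algebra_simps)
  have "x i + h i = h i * of_int (z+1)" using z by (simp add: algebra_simps)
  hence "\<exists>z'::int. x i + h i = h i * of_int z'" by blast
  thus ?thesis using x(1) le z hp unfolding grid_closed_def by auto
qed

lemma shift_back:
  assumes adm: "admissible_mesh a b h" and y: "y \<in> grid_closed a b h" "y i \<noteq> a i"
  shows "y(i := y i - h i) \<in> grid_closed a b h"
proof -
  obtain k l :: int where kl: "a i = of_int k * h i" "b i = of_int l * h i" "l - k > 1"
    using adm_kl[OF adm] by blast
  obtain z where z: "y i = h i * of_int z" "a i \<le> y i" "y i \<le> b i" using grid_coord[OF y(1), of i] by blast
  have hp: "h i > 0" using adm_h[OF adm] .
  have "k < z" using z kl y(2) hp by (simp add: mult.commute)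
  hence "real_of_int k \<le> of_int (z - 1)" by linarith
  hence "h i * of_int k \<le> h i * of_int (z - 1)" using hp by (intro mult_left_mono) auto
  hence le: "a i \<le> y i - h i" using z kl by (simp add: algebra_simps)
  have "y i - h i = h i * of_int (z - 1)" using z by (simp add: algebra_simps)
  hence "\<exists>z'::int. y i - h i = h i * of_int z'" by blast
  thus ?thesis using y(1) le z hp unfolding grid_closed_def by auto
qed

lemma shift_image:
  assumes adm: "admissible_mesh a b h"
  shows "(\<lambda>x. x(i := x i + h i)) ` {x \<in> grid_closed a b h. x i \<noteq> b i} = {y \<in> grid_closed a b h. y i \<noteq> a i}"
proof
  have hp: "h i > 0" using adm_h[OF adm] .
  show "(\<lambda>x. x(i := x i + h i)) ` {x \<in> grid_closed a b h. x i \<noteq> b i} \<subseteq> {y \<in> grid_closed a b h. y i \<noteq> a i}"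
  proof (rule subsetI)
    fix w assume "w \<in> (\<lambda>x. x(i := x i + h i)) ` {x \<in> grid_closed a b h. x i \<noteq> b i}"
    then obtain x where x: "x \<in> grid_closed a b h" "x i \<noteq> b i" and w: "w = x(i := x i + h i)" by blast
    have "x(i := x i + h i) \<in> grid_closed a b h" using shift_mem[OF adm x] .
    moreover have "(x(i := x i + h i)) i \<noteq> a i" using grid_coord[OF x(1), of i] hp by auto
    ultimately show "w \<in> {y \<in> grid_closed a b h. y i \<noteq> a i}" using w by simp
  qed
  show "{y \<in> grid_closed a b h. y i \<noteq> a i} \<subseteq> (\<lambda>x. x(i := x i + h i)) ` {x \<in> grid_closed a b h. x i \<noteq> b i}"
  proof clarify
    fix y assume y: "y \<in> grid_closed a b h" "y i \<noteq> a i"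
    have m: "y(i := y i - h i) \<in> grid_closed a b h" using shift_back[OF adm y] .
    have "(y(i := y i - h i)) i \<noteq> b i" using grid_coord[OF y(1), of i] hp by auto
    moreover have "y = (y(i := y i - h i))(i := (y(i := y i - h i)) i + h i)" by auto
    ultimately show "y \<in> (\<lambda>x. x(i := x i + h i)) ` {x \<in> grid_closed a b h. x i \<noteq> b i}"
      using m by blast
  qed
qed

lemma shift_inj: "inj_on (\<lambda>x. x(i := x i + (c::real))) A"
proof (rule inj_onI)
  fix x y assume "x(i := x i + c) = y(i := y i + c)"
  hence "\<forall>j. (x(i := x i + c)) j = (y(i := y i + c)) j" by simp
  thus "x = y" by (auto simp: fun_eq_iff split: if_splits)
qed

lemma phi_pos: "a i < t \<Longrightarrow> t < b i \<Longrightarrow> phi a b i t > 0"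
  unfolding phi_def by (intro sin_gt_zero) (auto simp: field_simps)

lemma phi_nonneg: assumes "a i \<le> t" "t \<le> b i" "a i < b i" shows "phi a b i t \<ge> 0"
proof -
  have "(t - a i)/(b i - a i) \<le> 1" using assms by (simp add: divide_le_eq)
  hence "pi * ((t - a i)/(b i - a i)) \<le> pi * 1" by (intro mult_left_mono) auto
  moreover have "0 \<le> pi * ((t - a i)/(b i - a i))" using assms by simp
  ultimately show ?thesis unfolding phi_def by (intro sin_ge_zero) auto
qed

lemma phi_add: assumes "a i < b i"
  shows "phi a b i (t + c) + phi a b i (t - c) = 2 * cos (pi * c / (b i - a i)) * phi a b i t"
proof -
  have e1: "pi * (t + c - a i) / (b i - a i) = pi * (t - a i) / (b i - a i) + pi * c / (b i - a i)"
    by (simp add: add_divide_distrib[symmetric] algebra_simps)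
  have e2: "pi * (t - c - a i) / (b i - a i) = pi * (t - a i) / (b i - a i) - pi * c / (b i - a i)"
    by (simp add: diff_divide_distrib[symmetric] algebra_simps)
  show ?thesis unfolding phi_def e1 e2 sin_add sin_diff by simp
qed

lemma two_minus_cos: "2 - 2 * cos (pi * c / L) = 4 * (sin (pi * c / (2 * L)))^2"
proof -
  have "cos (2 * (pi * c / (2 * L))) = 1 - 2 * (sin (pi * c / (2 * L)))^2" by (rule cos_double_sin)
  moreover have "2 * (pi * c / (2 * L)) = pi * c / L" by simp
  ultimately show ?thesis by simp
qed

lemma line_identity:
  assumes adm: "admissible_mesh a b h" and u: "u \<in> W0_grid a b h"
  shows "(\<Sum>x\<in>{x\<in>grid_closed a b h. x i \<noteq> b i}. (u (x(i := x i + h i)) - u x)^2) =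
     4 * (sin (pi * h i / (2 * (b i - a i))))^2 * (\<Sum>x\<in>grid_closed a b h. (u x)^2) +
     (\<Sum>x\<in>{x\<in>grid_closed a b h. x i \<noteq> b i}. (u x * phi a b i (x i + h i) - u (x(i := x i + h i)) * phi a b i (x i))^2 / (phi a b i (x i) * phi a b i (x i + h i)))"
proof -
  define G where "G = grid_closed a b h"
  define A where "A = {x\<in>G. x i \<noteq> b i}"
  define B where "B = {y\<in>G. y i \<noteq> a i}"
  define P where "P = phi a b i"
  define sh where "sh = (\<lambda>x::'a\<Rightarrow>real. x(i := x i + h i))"
  have finG: "finite G" unfolding G_def using grid_finite[OF adm] .
  have finA: "finite A" unfolding A_def using finG by auto
  have ab: "a i < b i" using adm_lt[OF adm] .
  have zero: "u x = 0" if "x \<in> G" "P (x i) = 0" for x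
  proof (cases "x i = a i \<or> x i = b i")
    case True thus ?thesis using W0_zero[OF u] that unfolding G_def by blast
  next
    case False
    hence "P (x i) > 0" using grid_coord[of x a b h i] that unfolding G_def P_def
      by (intro phi_pos) auto
    thus ?thesis using that by simp
  qed
  have nonneg: "P (x i) \<ge> 0" if "x \<in> G" for x
    using grid_coord[of x a b h i] that ab unfolding G_def P_def by (intro phi_nonneg) auto
  have shA: "sh x \<in> G" "(sh x) i = x i + h i" if "x \<in> A" for x
    using shift_mem[OF adm, of x i] that unfolding A_def G_def sh_def by auto
  define f1 where "f1 = (\<lambda>x. (u x)^2 * (1 - P (x i + h i) / P (x i)))"
  define f2 where "f2 = (\<lambda>x. (u (sh x))^2 * (1 - P (x i) / P (x i + h i)))"
  define R where "R = (\<lambda>x. (u x * P (x i + h i) - u (sh x) * P (x i))^2 / (P (x i) * P (x i + h i)))"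
  have step1: "(\<Sum>x\<in>A. (u (sh x) - u x)^2) = (\<Sum>x\<in>A. f1 x) + (\<Sum>x\<in>A. f2 x) + (\<Sum>x\<in>A. R x)"
  proof -
    have "(\<Sum>x\<in>A. (u (sh x) - u x)^2) = (\<Sum>x\<in>A. f1 x + f2 x + R x)"
    proof (rule sum.cong[OF refl])
      fix x assume x: "x \<in> A"
      hence xG: "x \<in> G" unfolding A_def by auto
      show "(u (sh x) - u x)^2 = f1 x + f2 x + R x"
        unfolding f1_def f2_def R_def
        apply (rule edge_identity)
        using nonneg[OF xG] nonneg[OF shA(1)[OF x]] shA(2)[OF x] zero[OF xG] zero[OF shA(1)[OF x]] by auto
    qed
    thus ?thesis by (simp add: sum.distrib)
  qed
  have S1: "(\<Sum>x\<in>A. f1 x) = (\<Sum>x\<in>G. f1 x)"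
    apply (rule sum.mono_neutral_left[OF finG])
    unfolding A_def f1_def using W0_zero[OF u] unfolding G_def by auto
  define g where "g = (\<lambda>y. (u y)^2 * (1 - P (y i - h i) / P (y i)))"
  have BA: "B = sh ` A" unfolding A_def B_def sh_def G_def using shift_image[OF adm] by simp
  have S2: "(\<Sum>x\<in>A. f2 x) = (\<Sum>y\<in>B. g y)"
    unfolding BA by (subst sum.reindex) (auto simp: sh_def shift_inj f2_def g_def)
  have S2': "(\<Sum>y\<in>B. g y) = (\<Sum>y\<in>G. g y)"
    apply (rule sum.mono_neutral_left[OF finG])
    unfolding B_def g_def using W0_zero[OF u] unfolding G_def by auto
  have comb: "(\<Sum>x\<in>G. f1 x) + (\<Sum>x\<in>G. g x) = (\<Sum>x\<in>G. 4 * (sin (pi * h i / (2 * (b i - a i))))^2 * (u x)^2)"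
  proof -
    have "(\<Sum>x\<in>G. f1 x) + (\<Sum>x\<in>G. g x) = (\<Sum>x\<in>G. f1 x + g x)" by (simp add: sum.distrib)
    also have "\<dots> = (\<Sum>x\<in>G. 4 * (sin (pi * h i / (2 * (b i - a i))))^2 * (u x)^2)"
    proof (rule sum.cong[OF refl])
      fix x assume xG: "x \<in> G"
      show "f1 x + g x = 4 * (sin (pi * h i / (2 * (b i - a i))))^2 * (u x)^2"
      proof (cases "P (x i) = 0")
        case True thus ?thesis using zero[OF xG] unfolding f1_def g_def by simp
      next
        case False
        have "f1 x + g x = (u x)^2 * (2 - (P (x i + h i) + P (x i - h i)) / P (x i))"
          unfolding f1_def g_def by (simp add: algebra_simps add_divide_distrib)
        also have "\<dots> = (u x)^2 * (2 - 2 * cos (pi * h i / (b i - a i)))"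
          using phi_add[of a i b "x i" "h i", OF ab] False unfolding P_def by simp
        finally show ?thesis by (simp add: two_minus_cos)
      qed
    qed
    finally show ?thesis .
  qed
  have "(\<Sum>x\<in>A. (u (sh x) - u x)^2) =
     4 * (sin (pi * h i / (2 * (b i - a i))))^2 * (\<Sum>x\<in>G. (u x)^2) + (\<Sum>x\<in>A. R x)"
    using step1 S1 S2 S2' comb by (simp add: sum_distrib_left)
  thus ?thesis unfolding A_def G_def R_def P_def sh_def .
qed

definition Rsum :: "('n::finite \<Rightarrow> real) \<Rightarrow> ('n \<Rightarrow> real) \<Rightarrow> ('n \<Rightarrow> real) \<Rightarrow> (('n \<Rightarrow> real) \<Rightarrow> real) \<Rightarrow> 'n \<Rightarrow> real" where
  "Rsum a b h u i = (\<Sum>x\<in>{x\<in>grid_closed a b h. x i \<noteq> b i}. (u x * phi a b i (x i + h i) - u (x(i := x i + h i)) * phi a b i (x i))^2 / (phi a b i (x i) * phi a b i (x i + h i)))"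

lemma Rsum_nonneg: assumes adm: "admissible_mesh a b h" shows "Rsum a b h u i \<ge> 0"
  unfolding Rsum_def
proof (rule sum_nonneg)
  fix x assume x: "x \<in> {x\<in>grid_closed a b h. x i \<noteq> b i}"
  have ab: "a i < b i" using adm_lt[OF adm] .
  have m: "x(i := x i + h i) \<in> grid_closed a b h" using shift_mem[OF adm, of x i] x by auto
  have "phi a b i (x i) \<ge> 0" using grid_coord[of x a b h i] x ab by (intro phi_nonneg) auto
  moreover have "phi a b i (x i + h i) \<ge> 0" using grid_coord[OF m, of i] ab by (intro phi_nonneg) auto
  ultimately show "0 \<le> (u x * phi a b i (x i + h i) - u (x(i := x i + h i)) * phi a b i (x i))^2 / (phi a b i (x i) * phi a b i (x i + h i))"
    by (intro divide_nonneg_nonneg mult_nonneg_nonneg) auto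
qed

lemma D_identity:
  assumes adm: "admissible_mesh a b h" and u: "u \<in> W0_grid a b h"
  shows "(\<Sum>i\<in>UNIV. \<Sum>x\<in>grid_closed a b h - grid_face_plus a b h i. (fwd_diff h i u x)\<^sup>2 * cell_volume h)
    = lambda1_h a b h * (\<Sum>x\<in>grid_closed a b h. (u x)\<^sup>2 * cell_volume h) + (\<Sum>i\<in>UNIV. cell_volume h / (h i)^2 * Rsum a b h u i)"
proof -
  have each: "(\<Sum>x\<in>grid_closed a b h - grid_face_plus a b h i. (fwd_diff h i u x)\<^sup>2 * cell_volume h)
    = 4 / (h i)\<^sup>2 * (sin (pi * h i / (2 * (b i - a i))))\<^sup>2 * (\<Sum>x\<in>grid_closed a b h. (u x)\<^sup>2 * cell_volume h) + cell_volume h / (h i)^2 * Rsum a b h u i" for i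
  proof -
    have "(\<Sum>x\<in>grid_closed a b h - grid_face_plus a b h i. (fwd_diff h i u x)\<^sup>2 * cell_volume h)
       = cell_volume h / (h i)^2 * (\<Sum>x\<in>{x\<in>grid_closed a b h. x i \<noteq> b i}. (u (x(i := x i + h i)) - u x)^2)"
      unfolding grid_Gi fwd_diff_def by (simp add: sum_distrib_left power_divide ac_simps)
    also have "\<dots> = cell_volume h / (h i)^2 * (4 * (sin (pi * h i / (2 * (b i - a i))))^2 * (\<Sum>x\<in>grid_closed a b h. (u x)^2) + Rsum a b h u i)"
      unfolding line_identity[OF adm u] Rsum_def ..
    also have "\<dots> = 4 / (h i)\<^sup>2 * (sin (pi * h i / (2 * (b i - a i))))\<^sup>2 * (\<Sum>x\<in>grid_closed a b h. (u x)\<^sup>2 * cell_volume h) + cell_volume h / (h i)^2 * Rsum a b h u i"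
      by (simp add: sum_distrib_left sum_distrib_right sum_divide_distrib algebra_simps)
    finally show ?thesis .
  qed
  show ?thesis unfolding each lambda1_h_def by (simp add: sum.distrib sum_distrib_right)
qed

definition ef :: "('n::finite \<Rightarrow> real) \<Rightarrow> ('n \<Rightarrow> real) \<Rightarrow> ('n \<Rightarrow> real) \<Rightarrow> real" where
  "ef a b x = (\<Prod>j\<in>UNIV. phi a b j (x j))"

lemma ef_W0: assumes adm: "admissible_mesh a b h" shows "ef a b \<in> W0_grid a b h"
  unfolding W0_grid_def
proof (rule CollectI, rule ballI)
  fix x assume "x \<in> grid_boundary a b h"
  then obtain i where i: "x i = a i \<or> x i = b i" by (auto simp: grid_boundary_def)
  have ab: "a i < b i" using adm_lt[OF adm] .
  have "phi a b i (x i) = 0" using i ab unfolding phi_def by auto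
  thus "ef a b x = 0" unfolding ef_def using prod_zero[of UNIV "\<lambda>j. phi a b j (x j)", OF finite_class.finite_UNIV] by blast
qed

lemma ef_Rsum: assumes adm: "admissible_mesh a b h" shows "Rsum a b h (ef a b) i = 0"
  unfolding Rsum_def
proof (rule sum.neutral, rule ballI)
  fix x
  define Q where "Q = (\<Prod>j\<in>UNIV - {i}. phi a b j (x j))"
  have e1: "ef a b x = phi a b i (x i) * Q" unfolding ef_def Q_def
    using prod.remove[of "UNIV" i "\<lambda>j. phi a b j (x j)"] by simp
  have "ef a b (x(i := x i + h i)) = phi a b i (x i + h i) * (\<Prod>j\<in>UNIV - {i}. phi a b j ((x(i := x i + h i)) j))"
    unfolding ef_def using prod.remove[of "UNIV" i "\<lambda>j. phi a b j ((x(i := x i + h i)) j)"] by simp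
  also have "(\<Prod>j\<in>UNIV - {i}. phi a b j ((x(i := x i + h i)) j)) = Q"
    unfolding Q_def by (rule prod.cong) auto
  finally have e2: "ef a b (x(i := x i + h i)) = phi a b i (x i + h i) * Q" .
  show "(ef a b x * phi a b i (x i + h i) - ef a b (x(i := x i + h i)) * phi a b i (x i))\<^sup>2 /
         (phi a b i (x i) * phi a b i (x i + h i)) = 0"
    unfolding e1 e2 by (simp add: algebra_simps)
qed

lemma cell_pos: "admissible_mesh a b h \<Longrightarrow> cell_volume h > 0"
  unfolding cell_volume_def by (intro prod_pos) (auto simp: adm_h)

lemma ef_pos: assumes adm: "admissible_mesh a b h"
  shows "(\<Sum>x\<in>grid_closed a b h. (ef a b x)\<^sup>2 * cell_volume h) > 0"
proof -
  define x0 where "x0 = (\<lambda>j. a j + h j)"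
  have in_x0: "a j < x0 j \<and> x0 j < b j" for j
    using adm_h[OF adm, of j] adm_ab[OF adm, of j] unfolding x0_def by auto
  have "x0 \<in> grid_closed a b h" unfolding grid_closed_def
  proof (clarify, intro conjI)
    fix j
    show "a j \<le> x0 j" "x0 j \<le> b j" using in_x0[of j] by auto
    obtain k l :: int where kl: "a j = of_int k * h j" "b j = of_int l * h j" "l - k > 1"
      using adm_kl[OF adm] by blast
    have "x0 j = h j * of_int (k + 1)" unfolding x0_def using kl by (simp add: algebra_simps)
    thus "\<exists>z::int. x0 j = h j * of_int z" by blast
  qed
  moreover have "ef a b x0 > 0" unfolding ef_def using in_x0 by (intro prod_pos phi_pos) auto
  ultimately show ?thesis using cell_pos[OF adm] grid_finite[OF adm]
    by (intro sum_pos2[of _ x0]) auto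
qed

lemma lambda_lower: assumes adm: "admissible_mesh a b h"
  shows "4 * (\<Sum>i\<in>UNIV. 1 / (b i - a i)^2) \<le> lambda1_h a b h"
  unfolding lambda1_h_def sum_distrib_left
proof (rule sum_mono)
  fix i
  define L where "L = b i - a i"
  define x where "x = pi * h i / (2 * L)"
  have hp: "h i > 0" using adm_h[OF adm] .
  have hL: "2 * h i \<le> L" using adm_ab[OF adm, of i] unfolding L_def .
  have Lp: "L > 0" using hp hL by linarith
  have x0: "0 \<le> x" unfolding x_def using hp Lp by simp
  have "x \<le> pi / 4" unfolding x_def using hp Lp hL by (simp add: field_simps)
  hence x1: "x \<le> 1" using pi_less_4 by linarith
  have s: "5 * x / 6 \<le> sin x" using sin_lower x0 x1 by blast
  have "(5 * x / 6)^2 \<le> (sin x)^2" using s x0 by (intro power_mono) auto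
  hence "4 / (h i)\<^sup>2 * (5 * x / 6)^2 \<le> 4 / (h i)\<^sup>2 * (sin x)^2" by (intro mult_left_mono) auto
  moreover have "4 / (h i)\<^sup>2 * (5 * x / 6)^2 = 25 * pi^2 / (36 * L^2)"
    unfolding x_def using hp Lp by (simp add: field_simps power2_eq_square)
  moreover have "4 * (1 / L^2) \<le> 25 * pi^2 / (36 * L^2)"
  proof -
    have "pi^2 \<ge> 3^2" using pi_gt3 by (intro power_mono) auto
    thus ?thesis using Lp by (simp add: field_simps)
  qed
  ultimately show "4 * (1 / (b i - a i)^2) \<le> 4 / (h i)\<^sup>2 * (sin (pi * h i / (2 * (b i - a i))))\<^sup>2"
    unfolding x_def L_def by linarith
qed

lemma lambda_pos: "admissible_mesh a b h \<Longrightarrow> lambda1_h a b h > 0"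
proof -
  assume adm: "admissible_mesh a b h"
  have "(\<Sum>i\<in>UNIV. 1 / (b i - a i)^2) > 0"
    using adm_lt[OF adm] by (intro sum_pos) (auto, metis less_irrefl)
  thus ?thesis using lambda_lower[OF adm] by linarith
qed

lemma lambda_bound:
  fixes a b :: "'n::finite \<Rightarrow> real"
  assumes adm: "admissible_mesh a b h"
  shows "1 / lambda1_h a b h \<le> 1 / (4 * (real CARD('n))\<^sup>2) * (\<Sum>i\<in>UNIV. (b i - a i)\<^sup>2)"
proof -
  define S1 where "S1 = (\<Sum>i\<in>UNIV. 1 / (b i - a i)^2)"
  define S2 where "S2 = (\<Sum>i\<in>UNIV. (b i - a i)^2)"
  define n where "n = real CARD('n)"
  have Lp: "b i - a i > 0" for i using adm_lt[OF adm] by simp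
  have S1p: "S1 > 0" unfolding S1_def using Lp by (intro sum_pos) (auto, metis less_irrefl)
  have np: "n > 0" unfolding n_def by simp
  have "(\<Sum>i\<in>UNIV. (1 / (b i - a i)) * (b i - a i))\<^sup>2 \<le> (\<Sum>i\<in>UNIV. (1 / (b i - a i))\<^sup>2) * (\<Sum>i\<in>UNIV. (b i - a i)\<^sup>2)"
    by (rule Cauchy_Schwarz_ineq_sum)
  moreover have "(\<Sum>i\<in>UNIV. (1 / (b i - a i)) * (b i - a i)) = n"
    unfolding n_def using Lp by (simp add: less_le)
  moreover have "(\<Sum>i\<in>UNIV. (1 / (b i - a i))\<^sup>2) = S1" unfolding S1_def by (simp add: power_divide)
  ultimately have cs: "n^2 \<le> S1 * S2" unfolding S2_def by simp
  have lam: "1 / lambda1_h a b h \<le> 1 / (4 * S1)"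
    using lambda_lower[OF adm] S1p unfolding S1_def by (intro divide_left_mono) auto
  also have "1 / (4 * S1) \<le> 1 / (4 * n^2) * S2"
    using cs S1p np by (simp add: field_simps)
  finally show ?thesis unfolding n_def S2_def .
qed

theorem mainTheorem5:
  fixes a b :: "'n::finite \<Rightarrow> real"
  assumes "\<forall>i. a i < b i"
  shows "\<exists>CP::real.
    (\<forall>h. admissible_mesh a b h \<longrightarrow>
       (\<forall>u\<in>W0_grid a b h. disc_L2_norm a b h u \<le> CP * disc_D_norm a b h u)) \<and>
    (\<forall>h. admissible_mesh a b h \<longrightarrow> 1 / lambda1_h a b h \<le> CP\<^sup>2) \<and>
    CP\<^sup>2 \<le> 1 / (4 * (real CARD('n))\<^sup>2) * (\<Sum>i\<in>UNIV. (b i - a i)\<^sup>2) \<and>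
    (\<forall>h. admissible_mesh a b h \<longrightarrow>
       (\<forall>u\<in>W0_grid a b h. disc_L2_norm a b h u \<le> sqrt (1 / lambda1_h a b h) * disc_D_norm a b h u) \<and>
       (\<forall>C. C \<ge> 0 \<longrightarrow> (\<forall>u\<in>W0_grid a b h. disc_L2_norm a b h u \<le> C * disc_D_norm a b h u)
             \<longrightarrow> 1 / lambda1_h a b h \<le> C\<^sup>2))"
proof -
  define K where "K = 1 / (4 * (real CARD('n))\<^sup>2) * (\<Sum>i\<in>UNIV. (b i - a i)\<^sup>2)"
  have K0: "K \<ge> 0" unfolding K_def by (intro mult_nonneg_nonneg sum_nonneg) auto
  define CP where "CP = sqrt K"
  have CP2: "CP\<^sup>2 = K" unfolding CP_def using K0 by simp
  have opt: "disc_L2_norm a b h u \<le> sqrt (1 / lambda1_h a b h) * disc_D_norm a b h u"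
    if adm: "admissible_mesh a b h" and u: "u \<in> W0_grid a b h" for h u
  proof -
    define Ls where "Ls = (\<Sum>x\<in>grid_closed a b h. (u x)\<^sup>2 * cell_volume h)"
    define E where "E = (\<Sum>i\<in>UNIV. cell_volume h / (h i)^2 * Rsum a b h u i)"
    have lp: "lambda1_h a b h > 0" using lambda_pos[OF adm] .
    have E0: "E \<ge> 0" unfolding E_def using Rsum_nonneg[OF adm] cell_pos[OF adm]
      by (intro sum_nonneg mult_nonneg_nonneg) auto
    have D: "disc_D_norm a b h u = sqrt (lambda1_h a b h * Ls + E)"
      unfolding disc_D_norm_def D_identity[OF adm u] Ls_def E_def ..
    have "sqrt (1 / lambda1_h a b h) * disc_D_norm a b h u = sqrt ((lambda1_h a b h * Ls + E) / lambda1_h a b h)"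
      unfolding D by (simp add: real_sqrt_mult[symmetric])
    moreover have "Ls \<le> (lambda1_h a b h * Ls + E) / lambda1_h a b h"
      using lp E0 by (simp add: field_simps)
    ultimately show ?thesis unfolding disc_L2_norm_def Ls_def[symmetric] by simp
  qed
  have P1: "\<forall>h. admissible_mesh a b h \<longrightarrow>
       (\<forall>u\<in>W0_grid a b h. disc_L2_norm a b h u \<le> CP * disc_D_norm a b h u)"
  proof (intro allI impI ballI)
    fix h u assume adm: "admissible_mesh a b h" and u: "u \<in> W0_grid a b h"
    have "sqrt (1 / lambda1_h a b h) \<le> CP" unfolding CP_def K_def
      using lambda_bound[OF adm] by simp
    moreover have "disc_D_norm a b h u \<ge> 0" unfolding disc_D_norm_def
      by (intro real_sqrt_ge_zero sum_nonneg mult_nonneg_nonneg) (auto simp: cell_pos[OF adm, THEN less_imp_le])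
    ultimately have "sqrt (1 / lambda1_h a b h) * disc_D_norm a b h u \<le> CP * disc_D_norm a b h u"
      by (intro mult_right_mono) auto
    thus "disc_L2_norm a b h u \<le> CP * disc_D_norm a b h u" using opt[OF adm u] by linarith
  qed
  have P2: "\<forall>h. admissible_mesh a b h \<longrightarrow> 1 / lambda1_h a b h \<le> CP\<^sup>2"
    unfolding CP2 K_def using lambda_bound by blast
  have P4: "\<forall>C. C \<ge> 0 \<longrightarrow> (\<forall>u\<in>W0_grid a b h. disc_L2_norm a b h u \<le> C * disc_D_norm a b h u)
             \<longrightarrow> 1 / lambda1_h a b h \<le> C\<^sup>2" if adm: "admissible_mesh a b h" for h
  proof (intro allI impI)
    fix C assume C: "C \<ge> 0"
      and hyp: "\<forall>u\<in>W0_grid a b h. disc_L2_norm a b h u \<le> C * disc_D_norm a b h u"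
    define Ls where "Ls = (\<Sum>x\<in>grid_closed a b h. (ef a b x)\<^sup>2 * cell_volume h)"
    have lp: "lambda1_h a b h > 0" using lambda_pos[OF adm] .
    have Lsp: "Ls > 0" unfolding Ls_def using ef_pos[OF adm] .
    have D: "disc_D_norm a b h (ef a b) = sqrt (lambda1_h a b h * Ls)"
      unfolding disc_D_norm_def D_identity[OF adm ef_W0[OF adm]] Ls_def ef_Rsum[OF adm] by simp
    have "sqrt Ls \<le> C * sqrt (lambda1_h a b h * Ls)"
      using hyp ef_W0[OF adm] D unfolding disc_L2_norm_def Ls_def by auto
    hence "(sqrt Ls)^2 \<le> (C * sqrt (lambda1_h a b h * Ls))^2"
      using Lsp by (intro power_mono) auto
    hence "Ls \<le> C^2 * (lambda1_h a b h * Ls)" using lp Lsp by (simp add: power_mult_distrib)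
    hence "1 \<le> C^2 * lambda1_h a b h" using Lsp by (simp add: field_simps)
    thus "1 / lambda1_h a b h \<le> C\<^sup>2" using lp by (simp add: field_simps)
  qed
  show ?thesis
    apply (rule exI[of _ CP])
    using P1 P2 P4 opt CP2 unfolding K_def by auto
qed

end
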